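(* Let $G$ be a finite group and $H$ a subgroup such that $\mathcal{O}_G(H)=\{K\mid H\le K\le G\}$ is Boolean of rank $2$, with coatoms $M_1,M_2$. If $H$ is normal in $M_1$ and in $M_2$, then $|M_1:H|\neq|M_2:H|$.
   Context: Boolean of rank $2$ means isomorphic to the lattice of subsets of a $2$-element set; the coatoms are the maximal elements of $\mathcal{O}_G(H)\setminus\{G\}$. *)

theory Defs
  imports "HOL-Algebra.Algebra"
begin

definition overgroups :: "('a, 'b) monoid_scheme \<Rightarrow> 'a set \<Rightarrow> 'a set set" where
  "overgroups G H = {K. subgroup K G \<and> H \<subseteq> K}"

definition boolean_rank2 :: "'a set set \<Rightarrow> bool" where
  "boolean_rank2 L \<longleftrightarrow> (\<exists>f. bij_betw f (Pow {0::nat, 1}) L \<and>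
      (\<forall>A\<in>Pow {0::nat, 1}. \<forall>B\<in>Pow {0::nat, 1}. A \<subseteq> B \<longleftrightarrow> f A \<subseteq> f B))"

definition coatom :: "('a, 'b) monoid_scheme \<Rightarrow> 'a set \<Rightarrow> 'a set \<Rightarrow> bool" where
  "coatom G H M \<longleftrightarrow> M \<in> overgroups G H - {carrier G} \<and>
      (\<forall>K\<in>overgroups G H - {carrier G}. M \<subseteq> K \<longrightarrow> K = M)"

definition sub_index :: "('a, 'b) monoid_scheme \<Rightarrow> 'a set \<Rightarrow> 'a set \<Rightarrow> nat" where
  "sub_index G M H = card (rcosets\<^bsub>G\<lparr>carrier := M\<rparr>\<^esub> H)"

end

theory Submission
  imports Defs
begin

lemma boolean_part:
  fixes G (structure) and H M1 M2 :: "'a set"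
  assumes "group G" 
    and "subgroup H G"
    and "boolean_rank2 (overgroups G H)"
    and "coatom G H M1" and "coatom G H M2" and "M1 \<noteq> M2"
  shows "overgroups G H = {H, M1, M2, carrier G}"
proof -
  interpret group G by fact
  obtain f where f: "bij_betw f (Pow {0::nat, 1}) (overgroups G H) \<and>
      (\<forall>A\<in>Pow {0::nat, 1}. \<forall>B\<in>Pow {0::nat, 1}. A \<subseteq> B \<longleftrightarrow> f A \<subseteq> f B)"
    using assms(3) unfolding boolean_rank2_def by (rule exE)
  have bij: "bij_betw f (Pow {0::nat, 1}) (overgroups G H)" using f by (rule conjunct1)
  have ordA: "\<forall>A\<in>Pow {0::nat, 1}. \<forall>B\<in>Pow {0::nat, 1}. A \<subseteq> B \<longleftrightarrow> f A \<subseteq> f B" using f by (rule conjunct2)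
  have ord: "A \<subseteq> B \<longleftrightarrow> f A \<subseteq> f B" if "A \<in> Pow {0::nat, 1}" "B\<in>Pow {0::nat, 1}" for A B
    using bspec[OF bspec[OF ordA that(1)] that(2)] .
  have img: "f ` Pow {0::nat,1} = overgroups G H" using bij by (simp add: bij_betw_def)
  have inj: "inj_on f (Pow {0::nat,1})" using bij by (simp add: bij_betw_def)
  have Pw: "Pow {0::nat,1} = {{}, {0}, {1}, {0,1}}" by blast
  have Hov: "H \<in> overgroups G H" using assms(2) by (simp add: overgroups_def)
  have Gov: "carrier G \<in> overgroups G H" unfolding overgroups_def
    using subgroup_self subgroup.subset[OF assms(2)] by simp
  have ovsub: "H \<subseteq> K \<and> K \<subseteq> carrier G" if "K \<in> overgroups G H" for K
    using that subgroup.subset unfolding overgroups_def by blast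
  have inPw: "{} \<in> Pow {0::nat,1}" "{0} \<in> Pow {0::nat,1}" "{1} \<in> Pow {0::nat,1}" "{0,1} \<in> Pow {0::nat,1}"
    by auto
  have fov: "f Z \<in> overgroups G H" if "Z \<in> Pow {0::nat,1}" for Z using img that by blast
  have ne: "f Z \<noteq> f W" if "Z \<in> Pow {0::nat,1}" "W \<in> Pow {0::nat,1}" "Z \<noteq> W" for Z W
    using inj_onD[OF inj _ that(1,2)] that(3) by blast
  obtain X0 where X0: "X0 \<in> Pow {0::nat,1}" "f X0 = H" using Hov img by (metis imageE)
  have "f {} \<subseteq> f X0" using ord[OF inPw(1) X0(1)] by simp
  then have f0: "f {} = H" using X0 ovsub[OF fov[OF inPw(1)]] by blast
  obtain Y0 where Y0: "Y0 \<in> Pow {0::nat,1}" "f Y0 = carrier G" using Gov img by (metis imageE)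
  have "f Y0 \<subseteq> f {0,1}" using ord[OF Y0(1) inPw(4)] Y0(1) by blast
  then have f01: "f {0,1} = carrier G" using Y0 ovsub[OF fov[OF inPw(4)]] by blast
  have cM: "M = f {0} \<or> M = f {1}" if "coatom G H M" for M
  proof -
    have Mov: "M \<in> overgroups G H" "M \<noteq> carrier G" using that by (auto simp: coatom_def)
    obtain Z where Z: "Z \<in> Pow {0::nat,1}" "f Z = M" using Mov img by (metis imageE)
    have "Z \<noteq> {0,1}" using Z Mov f01 by auto
    moreover have "Z \<noteq> {}"
    proof
      assume Z0: "Z = {}"
      have "f {0} \<noteq> carrier G" using ne[OF inPw(2) inPw(4)] f01 by simp
      moreover have "M \<subseteq> f {0}" using ord[OF inPw(1) inPw(2)] Z Z0 by simp
      ultimately have "f {0} = M" using that fov[OF inPw(2)] unfolding coatom_def by blast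
      then show False using ne[OF inPw(2) inPw(1)] Z Z0 by simp
    qed
    ultimately have "Z = {0} \<or> Z = {1}" using Z(1) Pw by blast
    then show ?thesis using Z by blast
  qed
  have d: "f {0} \<noteq> f {1}" using ne[OF inPw(2) inPw(3)] by simp
  have e: "overgroups G H = {f {}, f {0}, f {1}, f {0,1}}" using img Pw by simp
  from cM[OF assms(4)] cM[OF assms(5)] assms(6) d
  have "(M1 = f {0} \<and> M2 = f {1}) \<or> (M1 = f {1} \<and> M2 = f {0})" by blast
  then show ?thesis
  proof
    assume "M1 = f {0} \<and> M2 = f {1}"
    then show ?thesis using e f0 f01 by simp
  next
    assume "M1 = f {1} \<and> M2 = f {0}"
    then show ?thesis using e f0 f01 by (simp add: insert_commute)
  qed
qed

lemma conj_closed: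
  fixes G (structure)
  assumes "group G" "subgroup M G" "H \<lhd> G\<lparr>carrier := M\<rparr>" "g \<in> M" "h \<in> H"
  shows "g \<otimes> h \<otimes> inv g \<in> H" "inv g \<otimes> h \<otimes> g \<in> H"
proof -
  interpret group G by fact
  have g1: "g \<in> carrier (G\<lparr>carrier := M\<rparr>)" using assms(4) by simp
  have iv: "inv\<^bsub>G\<lparr>carrier := M\<rparr>\<^esub> g = inv g" using m_inv_consistent[OF assms(2,4)] .
  have mu: "x \<otimes>\<^bsub>G\<lparr>carrier := M\<rparr>\<^esub> y = x \<otimes> y" for x y by simp
  have "g \<otimes>\<^bsub>G\<lparr>carrier := M\<rparr>\<^esub> h \<otimes>\<^bsub>G\<lparr>carrier := M\<rparr>\<^esub> inv\<^bsub>G\<lparr>carrier := M\<rparr>\<^esub> g \<in> H"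
    using normal.inv_op_closed2[OF assms(3) g1 assms(5)] .
  then show "g \<otimes> h \<otimes> inv g \<in> H" unfolding mu iv .
  have "inv\<^bsub>G\<lparr>carrier := M\<rparr>\<^esub> g \<otimes>\<^bsub>G\<lparr>carrier := M\<rparr>\<^esub> h \<otimes>\<^bsub>G\<lparr>carrier := M\<rparr>\<^esub> g \<in> H"
    using normal.inv_op_closed1[OF assms(3) g1 assms(5)] .
  then show "inv g \<otimes> h \<otimes> g \<in> H" unfolding mu iv .
qed

lemma in_normalizer:
  fixes G (structure)
  assumes "group G" "subgroup H G" "g \<in> carrier G"
    and c1: "\<And>h. h \<in> H \<Longrightarrow> g \<otimes> h \<otimes> inv g \<in> H"
    and c2: "\<And>h. h \<in> H \<Longrightarrow> inv g \<otimes> h \<otimes> g \<in> H"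
  shows "g \<in> normalizer G H"
proof -
  interpret group G by fact
  have Hc: "H \<subseteq> carrier G" using assms(2) subgroup.subset by blast
  have "g <# H #> inv g = H"
  proof
    show "g <# H #> inv g \<subseteq> H" using c1 unfolding l_coset_def r_coset_def by auto
    show "H \<subseteq> g <# H #> inv g"
    proof
      fix h assume h: "h \<in> H"
      have hc: "h \<in> carrier G" using h Hc by blast
      have "h = g \<otimes> (inv g \<otimes> h \<otimes> g) \<otimes> inv g"
        using hc assms(3) by (simp add: m_assoc, metis inv_closed l_one m_assoc r_inv)
      then show "h \<in> g <# H #> inv g" using c2[OF h] unfolding l_coset_def r_coset_def by blast
    qed
  qed
  then show ?thesis unfolding normalizer_def stabilizer_def using assms(3) Hc by simp
qed

theorem lemma10p1:
  fixes G (structure) and H M1 M2 :: "'a set"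
  assumes "group G" and "finite (carrier G)"
    and "subgroup H G"
    and "boolean_rank2 (overgroups G H)"
    and "coatom G H M1" and "coatom G H M2" and "M1 \<noteq> M2"
    and "H \<lhd> G\<lparr>carrier := M1\<rparr>" and "H \<lhd> G\<lparr>carrier := M2\<rparr>"
  shows "sub_index G M1 H \<noteq> sub_index G M2 H"
proof -
  interpret group G by fact
  have ov: "overgroups G H = {H, M1, M2, carrier G}"
    using boolean_part[OF assms(1,3,4,5,6,7)] .
  have M1ov: "M1 \<in> overgroups G H" "M1 \<noteq> carrier G" using assms(5) by (auto simp: coatom_def)
  have M2ov: "M2 \<in> overgroups G H" "M2 \<noteq> carrier G" using assms(6) by (auto simp: coatom_def)
  have sM1: "subgroup M1 G" "H \<subseteq> M1" using M1ov by (auto simp: overgroups_def)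
  have sM2: "subgroup M2 G" "H \<subseteq> M2" using M2ov by (auto simp: overgroups_def)
  have n12: "\<not> M1 \<subseteq> M2"
  proof
    assume "M1 \<subseteq> M2"
    moreover have "M2 \<in> overgroups G H - {carrier G}" using M2ov by simp
    ultimately have "M2 = M1" using assms(5) unfolding coatom_def by blast
    then show False using assms(7) by simp
  qed
  have n21: "\<not> M2 \<subseteq> M1"
  proof
    assume "M2 \<subseteq> M1"
    moreover have "M1 \<in> overgroups G H - {carrier G}" using M1ov by simp
    ultimately have "M1 = M2" using assms(6) unfolding coatom_def by blast
    then show False using assms(7) by simp
  qed
  have "M1 \<inter> M2 \<in> overgroups G H"
    using subgroups_Inter_pair[OF sM1(1) sM2(1)] sM1(2) sM2(2) unfolding overgroups_def by simp
  then have "M1 \<inter> M2 = H \<or> M1 \<inter> M2 = M1 \<or> M1 \<inter> M2 = M2 \<or> M1 \<inter> M2 = carrier G" using ov by simp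
  moreover have "M1 \<inter> M2 \<noteq> M1" using n12 by (simp add: Int_absorb2 inf.absorb_iff1)
  moreover have "M1 \<inter> M2 \<noteq> M2" using n21 by (simp add: inf.absorb_iff2)
  moreover have "M1 \<inter> M2 \<noteq> carrier G" using M1ov(2) sM1(1) subgroup.subset by blast
  ultimately have int: "M1 \<inter> M2 = H" by blast
  have M1H: "M1 \<noteq> H" using n12 sM2(2) by blast
  have M2H: "M2 \<noteq> H" using n21 sM1(2) by blast
  define N where "N = normalizer G H"
  have Hc: "H \<subseteq> carrier G" using assms(3) subgroup.subset by blast
  have sN: "subgroup N G" unfolding N_def using normalizer_imp_subgroup[OF Hc] .
  have MN: "M \<subseteq> N" if "subgroup M G" "H \<lhd> G\<lparr>carrier := M\<rparr>" for M
  proof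
    fix g assume g: "g \<in> M"
    have gc: "g \<in> carrier G" using g that(1) subgroup.subset by blast
    show "g \<in> N" unfolding N_def
      by (rule in_normalizer[OF assms(1,3) gc]) (use conj_closed[OF assms(1) that g] in auto)
  qed
  have M1N: "M1 \<subseteq> N" using MN[OF sM1(1) assms(8)] .
  have M2N: "M2 \<subseteq> N" using MN[OF sM2(1) assms(9)] .
  have "N \<in> overgroups G H" using sN M1N sM1 by (auto simp: overgroups_def)
  then have "N = H \<or> N = M1 \<or> N = M2 \<or> N = carrier G" using ov by simp
  then have NG: "N = carrier G" using M1N M2N n12 n21 sM1 sM2 by blast
  have nH: "H \<lhd> G"
  proof (rule iffD2[OF normal_inv_iff], intro conjI ballI)
    show "subgroup H G" by fact
  next
    fix x h assume x: "x \<in> carrier G" and h: "h \<in> H"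
    have "x \<in> normalizer G H" using x NG N_def by simp
    then have "x <# H #> inv x = H" unfolding normalizer_def stabilizer_def using Hc by simp
    moreover have "x \<otimes> h \<otimes> inv x \<in> x <# H #> inv x" unfolding l_coset_def r_coset_def using h by blast
    ultimately show "x \<otimes> h \<otimes> inv x \<in> H" by simp
  qed
  have si: "sub_index G M H = card ((\<lambda>k. H #> k) ` M)" for M
  proof -
    have "rcosets\<^bsub>G\<lparr>carrier := M\<rparr>\<^esub> H = (\<lambda>k. H #> k) ` M"
      unfolding RCOSETS_def r_coset_def by auto
    then show ?thesis unfolding sub_index_def by simp
  qed
  have M1nG: "M1 \<noteq> carrier G" using M1ov(2) .
  have card_ne: "card ((\<lambda>k. H #> k) ` M1) \<noteq> card ((\<lambda>k. H #> k) ` M2)"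
proof
  assume eqc: "card ((\<lambda>k. H #> k) ` M1) = card ((\<lambda>k. H #> k) ` M2)"
  interpret normal H G by (rule nH)
  define Q where "Q = G Mod H"
  define \<phi> where "\<phi> K = (\<lambda>k. H #> k) ` K" for K
  have Qg: "group Q" unfolding Q_def by (rule factorgroup_is_group)
  have cQ: "carrier Q = \<phi> (carrier G)" unfolding Q_def \<phi>_def by (rule carrier_FactGroup)
  have finQ: "finite (carrier Q)" using assms(2) cQ \<phi>_def by simp
  have oneQ: "\<one>\<^bsub>Q\<^esub> = H" unfolding Q_def by simp
  have mulQ: "U \<otimes>\<^bsub>Q\<^esub> V = U <#> V" for U V unfolding Q_def by simp
  have invQ: "inv\<^bsub>Q\<^esub> U = set_inv U" if "U \<in> carrier Q" for U
    using inv_FactGroup that unfolding Q_def by blast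
  have ovsub: "K \<in> overgroups G H \<Longrightarrow> subgroup K G \<and> H \<subseteq> K" for K
    by (auto simp: overgroups_def)
  have corr: "\<Union>S \<in> overgroups G H \<and> S = \<phi> (\<Union>S)" if S: "subgroup S Q" for S
  proof -
    have Ssub: "S \<subseteq> carrier Q" using S subgroup.subset by blast
    have HS: "H \<in> S" using subgroup.one_closed[OF S] oneQ by simp
    have elt: "\<exists>g\<in>carrier G. U = H #> g" if "U \<in> S" for U
      using that Ssub cQ unfolding \<phi>_def by auto
    have "subgroup (\<Union>S) G"
    proof (rule subgroupI)
      show "\<Union>S \<subseteq> carrier G" using elt r_coset_subset_G subset by blast
      show "\<Union>S \<noteq> {}" using HS one_closed by blast
    next
      fix a assume "a \<in> \<Union>S"
      then obtain U where U: "U \<in> S" "a \<in> U" by blast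
      have "inv a \<in> set_inv U" using U(2) unfolding SET_INV_def by blast
      moreover have "set_inv U \<in> S" using invQ[of U] subgroup.m_inv_closed[OF S U(1)] Ssub U(1) by auto
      ultimately show "inv a \<in> \<Union>S" by blast
    next
      fix a b assume "a \<in> \<Union>S" "b \<in> \<Union>S"
      then obtain U V where U: "U \<in> S" "a \<in> U" "V \<in> S" "b \<in> V" by blast
      have "a \<otimes> b \<in> U <#> V" using U unfolding set_mult_def by blast
      moreover have "U <#> V \<in> S" using mulQ[of U V] subgroup.m_closed[OF S U(1) U(3)] by simp
      ultimately show "a \<otimes> b \<in> \<Union>S" by blast
    qed
    moreover have "H \<subseteq> \<Union>S" using HS by blast
    ultimately have "\<Union>S \<in> overgroups G H" by (simp add: overgroups_def)
    moreover have "S = \<phi> (\<Union>S)"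
    proof
      show "S \<subseteq> \<phi> (\<Union>S)"
      proof
        fix U assume U: "U \<in> S"
        then obtain g where g: "g \<in> carrier G" "U = H #> g" using elt by blast
        then have "g \<in> U" using rcos_self subgroup_axioms by blast
        then show "U \<in> \<phi> (\<Union>S)" unfolding \<phi>_def using U g by blast
      qed
      show "\<phi> (\<Union>S) \<subseteq> S"
      proof
        fix V assume "V \<in> \<phi> (\<Union>S)"
        then obtain x U where x: "U \<in> S" "x \<in> U" "V = H #> x" unfolding \<phi>_def by blast
        then obtain g where g: "g \<in> carrier G" "U = H #> g" using elt by blast
        have "H #> g = H #> x" using repr_independence[of x H g] x g subgroup_axioms by blast
        then show "V \<in> S" using x g by simp
      qed
    qed
    ultimately show ?thesis by blast
  qed
  have phiU: "\<Union>(\<phi> K) = K" if "K \<in> overgroups G H" for K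
  proof -
    have K: "subgroup K G" "H \<subseteq> K" using ovsub that by auto
    have "H #> k \<subseteq> K" if "k \<in> K" for k
      using K that unfolding r_coset_def by (auto intro: subgroup.m_closed)
    moreover have "k \<in> H #> k" if "k \<in> K" for k
      using rcos_self subgroup_axioms K that subgroup.subset by blast
    ultimately show ?thesis unfolding \<phi>_def by blast
  qed
  have phiinj: "K1 = K2" if "K1 \<in> overgroups G H" "K2 \<in> overgroups G H" "\<phi> K1 = \<phi> K2" for K1 K2
    using phiU that by metis
  have phisub: "subgroup (\<phi> K) Q" if "K \<in> overgroups G H" for K
  proof -
    have K: "subgroup K G" "H \<subseteq> K" using ovsub that by auto
    have Kc: "K \<subseteq> carrier G" using K subgroup.subset by blast
    show ?thesis
    proof (rule group.subgroupI[OF Qg])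
      show "\<phi> K \<subseteq> carrier Q" using cQ Kc unfolding \<phi>_def by auto
      show "\<phi> K \<noteq> {}" using K subgroup.one_closed unfolding \<phi>_def by blast
    next
      fix A assume "A \<in> \<phi> K"
      then obtain k where k: "k \<in> K" "A = H #> k" unfolding \<phi>_def by blast
      have "A \<in> carrier Q" using k cQ Kc unfolding \<phi>_def by auto
      then have "inv\<^bsub>Q\<^esub> A = H #> inv k" using invQ rcos_inv k Kc by auto
      then show "inv\<^bsub>Q\<^esub> A \<in> \<phi> K" using k K subgroup.m_inv_closed unfolding \<phi>_def by fastforce
    next
      fix A B assume "A \<in> \<phi> K" "B \<in> \<phi> K"
      then obtain k l where k: "k \<in> K" "A = H #> k" "l \<in> K" "B = H #> l" unfolding \<phi>_def by blast
      have kl: "k \<in> carrier G" "l \<in> carrier G" using k Kc by auto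
      have "A \<otimes>\<^bsub>Q\<^esub> B = H #> (k \<otimes> l)" by (simp add: mulQ k(2) k(4) rcos_sum kl)
      then show "A \<otimes>\<^bsub>Q\<^esub> B \<in> \<phi> K" using k K subgroup.m_closed unfolding \<phi>_def by fastforce
    qed
  qed
  interpret QG: group Q by (rule Qg)
  have Hov: "H \<in> overgroups G H" and M1ov: "M1 \<in> overgroups G H" and M2ov: "M2 \<in> overgroups G H"
    and Gov: "carrier G \<in> overgroups G H" using ov by auto
  have rc: "H #> h = H" if "h \<in> H" for h using subgroup.rcos_const[OF subgroup_axioms is_group that] .
  have phiH: "\<phi> H = {H}"
  proof -
    have "H \<noteq> {}" using one_closed by blast
    then show ?thesis unfolding \<phi>_def using rc by auto
  qed
  define A where "A = \<phi> M1"
  define B where "B = \<phi> M2"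
  have sA: "subgroup A Q" unfolding A_def using phisub M1ov .
  have sB: "subgroup B Q" unfolding B_def using phisub M2ov .
  have allsub: "S = {H} \<or> S = A \<or> S = B \<or> S = carrier Q" if "subgroup S Q" for S
  proof -
    have "\<Union>S \<in> {H, M1, M2, carrier G}" "S = \<phi> (\<Union>S)" using corr[OF that] ov by simp_all
    then have "S = \<phi> H \<or> S = \<phi> M1 \<or> S = \<phi> M2 \<or> S = \<phi> (carrier G)" by auto
    then show ?thesis using phiH cQ A_def B_def by simp
  qed
  have AQ: "A \<noteq> carrier Q" using phiinj[OF M1ov Gov] cQ A_def M1nG by auto
  have AH: "A \<noteq> {H}" using phiinj[OF M1ov Hov] phiH A_def M1H by auto
  have BH: "B \<noteq> {H}" using phiinj[OF M2ov Hov] phiH B_def M2H by auto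
  have HA: "H \<in> A" "H \<in> B" using subgroup.one_closed[OF sA] subgroup.one_closed[OF sB] oneQ by auto
  have AB: "A \<inter> B \<subseteq> {H}"
  proof
    fix U assume "U \<in> A \<inter> B"
    then obtain k l where kl: "k \<in> M1" "U = H #> k" "l \<in> M2" "U = H #> l" unfolding A_def B_def \<phi>_def by blast
    have "k \<in> carrier G" using kl sM1(1) subgroup.subset by blast
    then have "k \<in> H #> l" using kl rcos_self subgroup_axioms by metis
    moreover have "H #> l \<subseteq> M2" using kl(3) sM2(2) sM2(1) unfolding r_coset_def by (auto intro: subgroup.m_closed)
    ultimately have "k \<in> H" using int kl by blast
    then show "U \<in> {H}" using kl rc by simp
  qed
  have "\<exists>a. a \<in> A \<and> a \<noteq> H" using AH HA by auto
  then obtain a where a: "a \<in> A" "a \<noteq> H" by blast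
  have "\<exists>b. b \<in> B \<and> b \<noteq> H" using BH HA by auto
  then obtain b where b: "b \<in> B" "b \<noteq> H" by blast
  have aQ: "a \<in> carrier Q" using subgroup.mem_carrier[OF sA a(1)] .
  have bQ: "b \<in> carrier Q" using subgroup.mem_carrier[OF sB b(1)] .
  define c where "c = a \<otimes>\<^bsub>Q\<^esub> b"
  have cQ': "c \<in> carrier Q" unfolding c_def using QG.m_closed[OF aQ bQ] .
  have "inv\<^bsub>Q\<^esub> a \<otimes>\<^bsub>Q\<^esub> c = b"
  proof -
    have "inv\<^bsub>Q\<^esub> a \<otimes>\<^bsub>Q\<^esub> (a \<otimes>\<^bsub>Q\<^esub> b) = (inv\<^bsub>Q\<^esub> a \<otimes>\<^bsub>Q\<^esub> a) \<otimes>\<^bsub>Q\<^esub> b"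
      using QG.m_assoc[OF QG.inv_closed[OF aQ] aQ bQ] by simp
    also have "\<dots> = b" using QG.l_inv[OF aQ] QG.l_one[OF bQ] by simp
    finally show ?thesis by (simp add: c_def)
  qed
  then have cA: "c \<notin> A"
  proof (intro notI)
    assume e: "inv\<^bsub>Q\<^esub> a \<otimes>\<^bsub>Q\<^esub> c = b" and "c \<in> A"
    then have "b \<in> A" using subgroup.m_closed[OF sA subgroup.m_inv_closed[OF sA a(1)]] by metis
    then show False using AB b by blast
  qed
  have "c \<otimes>\<^bsub>Q\<^esub> inv\<^bsub>Q\<^esub> b = a"
  proof -
    have "(a \<otimes>\<^bsub>Q\<^esub> b) \<otimes>\<^bsub>Q\<^esub> inv\<^bsub>Q\<^esub> b = a \<otimes>\<^bsub>Q\<^esub> (b \<otimes>\<^bsub>Q\<^esub> inv\<^bsub>Q\<^esub> b)"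
      using QG.m_assoc[OF aQ bQ QG.inv_closed[OF bQ]] by simp
    also have "\<dots> = a" using QG.r_inv[OF bQ] QG.r_one[OF aQ] by simp
    finally show ?thesis by (simp add: c_def)
  qed
  then have cB: "c \<notin> B"
  proof (intro notI)
    assume e: "c \<otimes>\<^bsub>Q\<^esub> inv\<^bsub>Q\<^esub> b = a" and "c \<in> B"
    then have "a \<in> B" using subgroup.m_closed[OF sB _ subgroup.m_inv_closed[OF sB b(1)]] by metis
    then show False using AB a by blast
  qed
  define C where "C = generate Q {c}"
  have sC: "subgroup C Q" unfolding C_def using QG.generate_is_subgroup[of "{c}"] cQ' by simp
  have "c \<in> C" unfolding C_def by (simp add: generate.incl)
  then have n1: "C \<noteq> {H}" "C \<noteq> A" "C \<noteq> B" using cA cB HA(1) by auto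
  have CQ: "C = carrier Q" using allsub[OF sC] n1 by (elim disjE) simp_all
  have Cp: "C = { c [^]\<^bsub>Q\<^esub> (k :: int) | k. k \<in> UNIV }" unfolding C_def using QG.generate_pow[OF cQ'] .
  have comm: "a \<otimes>\<^bsub>Q\<^esub> b = b \<otimes>\<^bsub>Q\<^esub> a"
  proof -
    have "a \<in> C" "b \<in> C" using aQ bQ CQ by simp_all
    then have "\<exists>i::int. a = c [^]\<^bsub>Q\<^esub> i" "\<exists>j::int. b = c [^]\<^bsub>Q\<^esub> j" unfolding Cp by auto
    then obtain i j :: int where "a = c [^]\<^bsub>Q\<^esub> i" "b = c [^]\<^bsub>Q\<^esub> j" by blast
    then show ?thesis using QG.int_pow_mult[OF cQ', of i j, symmetric] QG.int_pow_mult[OF cQ', of j i, symmetric]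
      by (simp add: add.commute)
  qed
  define n where "n = card A"
  have finA: "finite A" using finite_subset[OF subgroup.subset[OF sA] finQ] .
  have npos: "n > 0" unfolding n_def using finA HA(1) card_gt_0_iff by auto
  have powone: "x [^]\<^bsub>Q\<^esub> card S = \<one>\<^bsub>Q\<^esub>" if "subgroup S Q" "x \<in> S" for S x
  proof -
    have g: "group (Q\<lparr>carrier := S\<rparr>)" using QG.subgroup_imp_group[OF that(1)] .
    have "x [^]\<^bsub>Q\<lparr>carrier := S\<rparr>\<^esub> order (Q\<lparr>carrier := S\<rparr>) = \<one>\<^bsub>Q\<lparr>carrier := S\<rparr>\<^esub>"
      using group.pow_order_eq_1[OF g] that(2) by simp
    then show ?thesis by (simp add: order_def QG.nat_pow_consistent[symmetric])
  qed
  have "c [^]\<^bsub>Q\<^esub> n = \<one>\<^bsub>Q\<^esub>"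
    unfolding c_def using QG.pow_mult_distrib[OF comm aQ bQ]
      powone[OF sA a(1)] powone[OF sB b(1)] eqc n_def A_def B_def \<phi>_def
    by (simp add: QG.l_one QG.one_closed)
  then have "QG.ord c dvd n" using QG.pow_eq_id[OF cQ'] by blast
  then have "QG.ord c \<le> n" using npos by (simp add: dvd_imp_le)
  moreover have "QG.ord c = card (carrier Q)" using QG.generate_pow_card[OF cQ'] CQ C_def by simp
  ultimately have "card (carrier Q) \<le> card A" using n_def by simp
  then have "A = carrier Q" using card_seteq[OF finQ] sA subgroup.subset by blast
  then show False using AQ by simp
qed
  show ?thesis unfolding si using card_ne .
qed

end
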